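(* For $x,y\in S^1\cap\mathbb{H}^2$, $$2\rho_{\mathbb{H}^2}(x,y)=\rho_{\mathbb{B}^2}(\operatorname{Re}x,\operatorname{Re}y),$$ where $\operatorname{Re}x,\operatorname{Re}y\in(-1,1)$ are the orthogonal projections of $x,y$ onto the real axis, regarded as points of $\mathbb{B}^2$.
   Context: $\mathbb{H}^2$ is the upper half plane, $\mathbb{B}^2$ the unit disk, $S^1$ the unit circle. $\rho_{\mathbb{H}^2}$ is given by $\cosh\rho_{\mathbb{H}^2}(x,y)=1+\frac{|x-y|^2}{2\operatorname{Im}x\operatorname{Im}y}$ and $\rho_{\mathbb{B}^2}$ by $\sinh\frac{\rho_{\mathbb{B}^2}(x,y)}{2}=\frac{|x-y|}{\sqrt{1-|x|^2}\sqrt{1-|y|^2}}$. *)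

theory Defs
  imports "HOL-Analysis.Analysis"
begin

definition upper_half_plane :: "complex set" where
  "upper_half_plane = {z. Im z > 0}"

definition unit_disk :: "complex set" where
  "unit_disk = {z. cmod z < 1}"

definition unit_circle :: "complex set" where
  "unit_circle = {z. cmod z = 1}"

definition rho_H :: "complex \<Rightarrow> complex \<Rightarrow> real" where
  "rho_H x y = arcosh (1 + (cmod (x - y))\<^sup>2 / (2 * Im x * Im y))"

definition rho_B :: "complex \<Rightarrow> complex \<Rightarrow> real" where
  "rho_B x y = 2 * arsinh (cmod (x - y) / (sqrt (1 - (cmod x)\<^sup>2) * sqrt (1 - (cmod y)\<^sup>2)))"

end

theory Submission
  imports Defs
begin

lemma key:
  fixes a u b v :: real
  assumes ha: "a^2 + u^2 = 1" and hb: "b^2 + v^2 = 1" and u: "u > 0" and v: "v > 0"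
  shows "2 * arcosh (1 + ((a-b)^2 + (u-v)^2) / (2 * u * v))
       = 2 * arsinh (abs (a - b) / (sqrt (1 - a^2) * sqrt (1 - b^2)))"
proof -
  define C where "C = (1 - a * b) / (u * v)"
  define z where "z = abs (a - b) / (u * v)"
  have st: "u * v > 0" using u v by simp
  have sq1: "sqrt (1 - a^2) = u" using ha u by (simp add: real_sqrt_unique)
  have sq2: "sqrt (1 - b^2) = v" using hb v by (simp add: real_sqrt_unique)
  have num: "(a-b)^2 + (u-v)^2 = 2 * (1 - a * b) - 2 * (u * v)"
    using ha hb by (simp add: power2_eq_square algebra_simps)
  have C1: "1 + ((a-b)^2 + (u-v)^2) / (2 * u * v) = C"
    unfolding C_def num using u v by (simp add: field_simps)
  have id: "(1 - a * b)^2 = (a-b)^2 + (u * v)^2"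
  proof -
    have "u^2 = 1 - a^2" "v^2 = 1 - b^2" using ha hb by auto
    then have "(u * v)^2 = (1-a^2) * (1-b^2)" by (simp add: power_mult_distrib)
    then show ?thesis by (simp add: power2_eq_square algebra_simps)
  qed
  have Csq: "C^2 = z^2 + 1"
  proof -
    have w: "(u * v)^2 > 0" using u v by simp
    have "C^2 = (1 - a * b)^2 / (u * v)^2" unfolding C_def by (simp add: power_divide)
    also have "... = ((a-b)^2 + (u * v)^2) / (u * v)^2" using id by simp
    also have "... = (a-b)^2 / (u * v)^2 + 1" using w by (simp add: add_divide_distrib)
    also have "... = z^2 + 1" unfolding z_def by (simp add: power_divide)
    finally show ?thesis .
  qed
  have z0: "z \<ge> 0" unfolding z_def using st by simp
  have Cge: "C \<ge> 0"
  proof -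
    have e: "0 \<le> (a-b)^2" by simp
    have "a^2 \<le> 1" "b^2 \<le> 1" using ha hb by (smt (verit) zero_le_power2)+
    moreover have "2 * (a * b) \<le> a^2 + b^2" using e by (simp add: power2_eq_square algebra_simps)
    ultimately have "a * b \<le> 1" by linarith
    then show ?thesis unfolding C_def using st by simp
  qed
  have C1': "C \<ge> 1"
  proof -
    have "C^2 \<ge> 1^2" using Csq z0 by simp
    then show ?thesis using Cge by (metis abs_of_nonneg abs_one power2_le_iff_abs_le zero_le_one)
  qed
  have "sqrt (C^2 - 1) = z" using Csq z0 by simp
  moreover have "sqrt (z^2 + 1) = C" using Csq Cge by (metis real_sqrt_unique)
  ultimately have "arcosh C = arsinh z" using C1' by (simp add: arcosh_real_def arsinh_real_def add.commute)
  then show ?thesis using C1 sq1 sq2 by (simp add: z_def)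
qed

theorem mainTheorem5:
  fixes x y :: complex
  assumes "x \<in> unit_circle \<inter> upper_half_plane" and "y \<in> unit_circle \<inter> upper_half_plane"
  shows "2 * rho_H x y = rho_B (complex_of_real (Re x)) (complex_of_real (Re y))"
proof -
  have hx: "(Re x)^2 + (Im x)^2 = 1" "Im x > 0" using assms(1)
    by (auto simp: unit_circle_def upper_half_plane_def cmod_def)
  have hy: "(Re y)^2 + (Im y)^2 = 1" "Im y > 0" using assms(2)
    by (auto simp: unit_circle_def upper_half_plane_def cmod_def)
  have n: "(cmod (x - y))^2 = (Re x - Re y)^2 + (Im x - Im y)^2"
    by (simp add: cmod_def)
  have n2: "cmod (complex_of_real (Re x) - complex_of_real (Re y)) = abs (Re x - Re y)"
    by (metis norm_of_real of_real_diff)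
  show ?thesis unfolding rho_H_def rho_B_def n n2 norm_of_real power2_abs
    using key[OF hx(1) hy(1) hx(2) hy(2)] by (simp add: mult.assoc)
qed

end
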